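(* Assume, in the setting described in the context, the strengthened saturation assumption: there is a fixed $b_{0,\gamma}\in(0,1)$ and a number $b_{h,\gamma}<b_{0,\gamma}$ such that $$\gamma < b_{h,\gamma}\,|J(u)-J(\tilde u)|.$$ Then the practical error estimator $\eta_h^{(2)}$ satisfies $$\underline{c}_{h,\gamma}|\eta_h^{(2)}| \le |J(u)-J(\tilde u)| \le \overline{c}_{h,\gamma}|\eta_h^{(2)}| \quad\text{and}\quad \underline{c}_{\gamma}|\eta_h^{(2)}| \le |J(u)-J(\tilde u)| \le \overline{c}_{\gamma}|\eta_h^{(2)}|,$$ where $\underline{c}_{h,\gamma}:=1/(1+b_{h,\gamma})$, $\overline{c}_{h,\gamma}:=1/(1-b_{h,\gamma})$, $\underline{c}_{\gamma}:=1/(1+b_{0,\gamma})$ and $\overline{c}_{\gamma}:=1/(1-b_{0,\gamma})$.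
   Context: Let $U$ and $V$ be real Banach spaces with dual $V^*$. Let $\mathcal{A}:U\to V^*$ be a (nonlinear) operator that is three times continuously Fréchet differentiable, and let $J:U\to\mathbb{R}$ be three times continuously Fréchet differentiable. Notation: $\mathcal{A}(w)(v)$ is the value of $\mathcal{A}(w)\in V^*$ at $v\in V$. For fixed $v$, $\mathcal{A}'(w)(\varphi,v)$, $\mathcal{A}''(w)(\varphi,\psi,v)$ and $\mathcal{A}'''(w)(\varphi,\psi,\chi,v)$ denote the first, second and third Fréchet derivatives of $w\mapsto\mathcal{A}(w)(v)$ at $w$ in the directions $\varphi,\psi,\chi\in U$. Analogously, $J'(w)(\varphi)$ and $J'''(w)(\varphi,\psi,\chi)$ denote derivatives of $J$. Let $u\in U$ satisfy $\mathcal{A}(u)(v)=0$ for all $v\in V$, and let $z\in V$ satisfy $\mathcal{A}'(u)(\varphi,z)=J'(u)(\varphi)$ for all $\varphi\in U$. Let $U_h^{(2)}\subset U$ and $V_h^{(2)}\subset V$ be finite-dimensional subspaces. Let $u_h^{(2)}\in U_h^{(2)}$ satisfy $\mathcal{A}(u_h^{(2)})(v)=0$ for all $v\in V_h^{(2)}$. Let $z_h^{(2)}\in V_h^{(2)}$ satisfy $\mathcal{A}'(u_h^{(2)})(\varphi,z_h^{(2)})=J'(u_h^{(2)})(\varphi)$ for all $\varphi\in U_h^{(2)}$. Let $\tilde u\in U_h^{(2)}$ and $\tilde z\in V_h^{(2)}$ be arbitrary fixed elements. Define $\rho(\tilde u)(v):=-\mathcal{A}(\tilde u)(v)$ and $\rho^*(\tilde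 u,\tilde z)(\varphi):=J'(\tilde u)(\varphi)-\mathcal{A}'(\tilde u)(\varphi,\tilde z)$. With $e:=u-\tilde u$ and $e^*:=z-\tilde z$, define $$\mathcal{R}^{(3)}:=\frac12\int_0^1\Big[J'''(\tilde u+se)(e,e,e)-\mathcal{A}'''(\tilde u+se)(e,e,e,\tilde z+se^* )-3\mathcal{A}''(\tilde u+se)(e,e,e^* )\Big]s(s-1)\,ds.$$ Let $\mathcal{R}^{(3)(2)}$ be the same expression with $e,e^*,z$ replaced by $e^{(2)}:=u_h^{(2)}-\tilde u$, $e^{(2),*}:=z_h^{(2)}-\tilde z$, $z_h^{(2)}$. Define $\eta_h^{(2)}:=\tfrac12\rho(\tilde u)(z_h^{(2)}-\tilde z)+\tfrac12\rho^*(\tilde u,\tilde z)(u_h^{(2)}-\tilde u)$ and $$\gamma:=|J(u)-J(u_h^{(2)})|+|\mathcal{R}^{(3)}-\mathcal{R}^{(3)(2)}|+|\rho(\tilde u)(\tilde z)|+|\mathcal{R}^{(3)}|.$$ *)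

theory Defs
  imports "HOL-Analysis.Analysis"
begin

text \<open>Dual space V* is rendered as the Banach space of bounded linear functionals
  bounded linear functionals on V (type blinfun into real).  Derivatives are iterated bounded linear maps; e.g.
  A''(w)(phi,psi,v) is blinfun_apply (blinfun_apply (blinfun_apply (A2 w) phi) psi) v.\<close>

definition app3 :: "('a::real_normed_vector \<Rightarrow>\<^sub>L 'b::real_normed_vector \<Rightarrow>\<^sub>L 'c::real_normed_vector \<Rightarrow>\<^sub>L 'd::real_normed_vector) \<Rightarrow> 'a \<Rightarrow> 'b \<Rightarrow> 'c \<Rightarrow> 'd"
  where "app3 F x y w = blinfun_apply (blinfun_apply (blinfun_apply F x) y) w"

definition app2 :: "('a::real_normed_vector \<Rightarrow>\<^sub>L 'b::real_normed_vector \<Rightarrow>\<^sub>L 'c::real_normed_vector) \<Rightarrow> 'a \<Rightarrow> 'b \<Rightarrow> 'c"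
  where "app2 F x y = blinfun_apply (blinfun_apply F x) y"

text \<open>The third-order remainder R^(3) of the dual weighted residual error representation.
  J3 = J''', A2 = A'', A3 = A''', ut = tilde u, zt = tilde z, e = u - ut, es = z - zt.\<close>
definition R3 ::
  "('u::real_normed_vector \<Rightarrow> ('u \<Rightarrow>\<^sub>L 'u \<Rightarrow>\<^sub>L 'u \<Rightarrow>\<^sub>L real))
   \<Rightarrow> ('u \<Rightarrow> ('u \<Rightarrow>\<^sub>L 'u \<Rightarrow>\<^sub>L 'v::real_normed_vector \<Rightarrow>\<^sub>L real))
   \<Rightarrow> ('u \<Rightarrow> ('u \<Rightarrow>\<^sub>L 'u \<Rightarrow>\<^sub>L 'u \<Rightarrow>\<^sub>L 'v \<Rightarrow>\<^sub>L real))
   \<Rightarrow> 'u \<Rightarrow> 'v \<Rightarrow> 'u \<Rightarrow> 'v \<Rightarrow> real"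
  where "R3 J3 A2 A3 ut zt e es =
    1/2 * integral {0..1} (\<lambda>s::real.
       (app3 (J3 (ut + s *\<^sub>R e)) e e e
        - blinfun_apply (app3 (A3 (ut + s *\<^sub>R e)) e e e) (zt + s *\<^sub>R es)
        - 3 * app3 (A2 (ut + s *\<^sub>R e)) e e es) * (s * (s - 1)))"

end

theory Submission
  imports Defs
begin


lemma curve_vd:
  assumes "\<And>w. (F has_derivative blinfun_apply (F' w)) (at w)"
  shows "((\<lambda>s. F (a + s *\<^sub>R e)) has_vector_derivative blinfun_apply (F' (a + s *\<^sub>R e)) e) (at s within T)"
proof -
  have p: "((\<lambda>s. a + s *\<^sub>R e) has_derivative (\<lambda>h. h *\<^sub>R e)) (at s within T)"
    by (auto intro!: derivative_eq_intros)
  have "((\<lambda>s. F (a + s *\<^sub>R e)) has_derivative (\<lambda>h. blinfun_apply (F' (a + s *\<^sub>R e)) (h *\<^sub>R e))) (at s within T)"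
    by (rule has_derivative_compose[OF p assms])
  then show ?thesis
    by (simp add: has_vector_derivative_def blinfun.scaleR_right)
qed

lemma bapp_vd:
  assumes "(X has_vector_derivative X') (at s within T)"
    and "(Y has_vector_derivative Y') (at s within T)"
  shows "((\<lambda>s. blinfun_apply (X s) (Y s)) has_vector_derivative
     (blinfun_apply (X s) Y' + blinfun_apply X' (Y s))) (at s within T)"
  using bounded_bilinear.has_vector_derivative[OF bounded_bilinear_blinfun_apply assms] .

lemma bapp_vd_const:
  assumes "(X has_vector_derivative X') (at s within T)"
  shows "((\<lambda>s. blinfun_apply (X s) y) has_vector_derivative blinfun_apply X' y) (at s within T)"
  using bapp_vd[OF assms has_vector_derivative_const[of y]] by simp

theorem mainTheorem2:
  fixes A :: "'u::banach \<Rightarrow> ('v::banach \<Rightarrow>\<^sub>L real)"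
    and A1 :: "'u \<Rightarrow> ('u \<Rightarrow>\<^sub>L 'v \<Rightarrow>\<^sub>L real)"
    and A2 :: "'u \<Rightarrow> ('u \<Rightarrow>\<^sub>L 'u \<Rightarrow>\<^sub>L 'v \<Rightarrow>\<^sub>L real)"
    and A3 :: "'u \<Rightarrow> ('u \<Rightarrow>\<^sub>L 'u \<Rightarrow>\<^sub>L 'u \<Rightarrow>\<^sub>L 'v \<Rightarrow>\<^sub>L real)"
    and J :: "'u \<Rightarrow> real"
    and J1 :: "'u \<Rightarrow> ('u \<Rightarrow>\<^sub>L real)"
    and J2 :: "'u \<Rightarrow> ('u \<Rightarrow>\<^sub>L 'u \<Rightarrow>\<^sub>L real)"
    and J3 :: "'u \<Rightarrow> ('u \<Rightarrow>\<^sub>L 'u \<Rightarrow>\<^sub>L 'u \<Rightarrow>\<^sub>L real)"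
    and Uh :: "'u set" and Vh :: "'v set"
    and u ut uh :: 'u and z zt zh :: 'v
    and b0 bh :: real
  assumes A_deriv: "\<And>w. (A has_derivative blinfun_apply (A1 w)) (at w)"
    and A1_deriv: "\<And>w. (A1 has_derivative blinfun_apply (A2 w)) (at w)"
    and A2_deriv: "\<And>w. (A2 has_derivative blinfun_apply (A3 w)) (at w)"
    and A3_cont: "continuous_on UNIV A3"
    and J_deriv: "\<And>w. (J has_derivative blinfun_apply (J1 w)) (at w)"
    and J1_deriv: "\<And>w. (J1 has_derivative blinfun_apply (J2 w)) (at w)"
    and J2_deriv: "\<And>w. (J2 has_derivative blinfun_apply (J3 w)) (at w)"
    and J3_cont: "continuous_on UNIV J3"
    and primal: "\<And>v. blinfun_apply (A u) v = 0"
    and adjoint: "\<And>\<phi>. app2 (A1 u) \<phi> z = blinfun_apply (J1 u) \<phi>"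
    and Uh_sub: "subspace Uh" and Uh_fin: "\<exists>B. finite B \<and> Uh = span B"
    and Vh_sub: "subspace Vh" and Vh_fin: "\<exists>B. finite B \<and> Vh = span B"
    and uh_in: "uh \<in> Uh"
    and primal_h: "\<And>v. v \<in> Vh \<Longrightarrow> blinfun_apply (A uh) v = 0"
    and zh_in: "zh \<in> Vh"
    and adjoint_h: "\<And>\<phi>. \<phi> \<in> Uh \<Longrightarrow> app2 (A1 uh) \<phi> zh = blinfun_apply (J1 uh) \<phi>"
    and ut_in: "ut \<in> Uh" and zt_in: "zt \<in> Vh"
    and b0: "0 < b0" "b0 < 1" and bh: "bh < b0"
    and saturation:
      "\<bar>J u - J uh\<bar>
       + \<bar>R3 J3 A2 A3 ut zt (u - ut) (z - zt) - R3 J3 A2 A3 ut zt (uh - ut) (zh - zt)\<bar>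
       + \<bar>- blinfun_apply (A ut) zt\<bar>
       + \<bar>R3 J3 A2 A3 ut zt (u - ut) (z - zt)\<bar>
       < bh * \<bar>J u - J ut\<bar>"
  shows
    "let \<eta> = 1/2 * (- blinfun_apply (A ut) (zh - zt))
             + 1/2 * (blinfun_apply (J1 ut) (uh - ut) - app2 (A1 ut) (uh - ut) zt)
     in 1 / (1 + bh) * \<bar>\<eta>\<bar> \<le> \<bar>J u - J ut\<bar>
      \<and> \<bar>J u - J ut\<bar> \<le> 1 / (1 - bh) * \<bar>\<eta>\<bar>
      \<and> 1 / (1 + b0) * \<bar>\<eta>\<bar> \<le> \<bar>J u - J ut\<bar>
      \<and> \<bar>J u - J ut\<bar> \<le> 1 / (1 - b0) * \<bar>\<eta>\<bar>"
proof -
  define e where "e = uh - ut"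
  define es where "es = zh - zt"
  define p where "p = (\<lambda>s::real. ut + s *\<^sub>R e)"
  define q where "q = (\<lambda>s::real. zt + s *\<^sub>R es)"
  define f where "f = (\<lambda>s. J (p s) - blinfun_apply (A (p s)) (q s))"
  define g where "g = (\<lambda>s. blinfun_apply (J1 (p s)) e - app2 (A1 (p s)) e (q s) - blinfun_apply (A (p s)) es)"
  define g1 where "g1 = (\<lambda>s. app2 (J2 (p s)) e e - app3 (A2 (p s)) e e (q s) - 2 * app2 (A1 (p s)) e es)"
  define g2 where "g2 = (\<lambda>s. app3 (J3 (p s)) e e e - blinfun_apply (app3 (A3 (p s)) e e e) (q s) - 3 * app3 (A2 (p s)) e e es)"
  define H where "H = (\<lambda>s. g1 s * (s * (s - 1)) - g s * (2 * s - 1) + 2 * f s)"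
  have qd: "(q has_vector_derivative es) (at s within T)" for s T
    unfolding q_def by (auto intro!: derivative_eq_intros)
  have fd: "(f has_vector_derivative g s) (at s within T)" for s T
  proof -
    have 1: "((\<lambda>s. J (p s)) has_vector_derivative blinfun_apply (J1 (p s)) e) (at s within T)"
      unfolding p_def by (rule curve_vd[OF J_deriv])
    have 2: "((\<lambda>s. A (p s)) has_vector_derivative blinfun_apply (A1 (p s)) e) (at s within T)"
      unfolding p_def by (rule curve_vd[OF A_deriv])
    show ?thesis unfolding f_def g_def
      using has_vector_derivative_diff[OF 1 bapp_vd[OF 2 qd]]
      by (simp add: app2_def algebra_simps)
  qed
  have gd: "(g has_vector_derivative g1 s) (at s within T)" for s T
  proof -
    have 1: "((\<lambda>s. J1 (p s)) has_vector_derivative blinfun_apply (J2 (p s)) e) (at s within T)"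
      unfolding p_def by (rule curve_vd[OF J1_deriv])
    have 2: "((\<lambda>s. A1 (p s)) has_vector_derivative blinfun_apply (A2 (p s)) e) (at s within T)"
      unfolding p_def by (rule curve_vd[OF A1_deriv])
    have 3: "((\<lambda>s. A (p s)) has_vector_derivative blinfun_apply (A1 (p s)) e) (at s within T)"
      unfolding p_def by (rule curve_vd[OF A_deriv])
    have a: "((\<lambda>s. blinfun_apply (J1 (p s)) e) has_vector_derivative blinfun_apply (blinfun_apply (J2 (p s)) e) e) (at s within T)"
      by (rule bapp_vd_const[OF 1])
    have b: "((\<lambda>s. blinfun_apply (A1 (p s)) e) has_vector_derivative blinfun_apply (blinfun_apply (A2 (p s)) e) e) (at s within T)"
      by (rule bapp_vd_const[OF 2])
    have c: "((\<lambda>s. blinfun_apply (A (p s)) es) has_vector_derivative blinfun_apply (blinfun_apply (A1 (p s)) e) es) (at s within T)"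
      by (rule bapp_vd_const[OF 3])
    show ?thesis unfolding g_def g1_def
      using has_vector_derivative_diff[OF has_vector_derivative_diff[OF a bapp_vd[OF b qd]] c]
      by (simp add: app2_def app3_def algebra_simps)
  qed
  have g1d: "(g1 has_vector_derivative g2 s) (at s within T)" for s T
  proof -
    have 1: "((\<lambda>s. J2 (p s)) has_vector_derivative blinfun_apply (J3 (p s)) e) (at s within T)"
      unfolding p_def by (rule curve_vd[OF J2_deriv])
    have 2: "((\<lambda>s. A2 (p s)) has_vector_derivative blinfun_apply (A3 (p s)) e) (at s within T)"
      unfolding p_def by (rule curve_vd[OF A2_deriv])
    have 3: "((\<lambda>s. A1 (p s)) has_vector_derivative blinfun_apply (A2 (p s)) e) (at s within T)"
      unfolding p_def by (rule curve_vd[OF A1_deriv])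
    have a: "((\<lambda>s. app2 (J2 (p s)) e e) has_vector_derivative app3 (J3 (p s)) e e e) (at s within T)"
      unfolding app2_def app3_def by (rule bapp_vd_const[OF bapp_vd_const[OF 1]])
    have b: "((\<lambda>s. blinfun_apply (blinfun_apply (A2 (p s)) e) e) has_vector_derivative blinfun_apply (blinfun_apply (blinfun_apply (A3 (p s)) e) e) e) (at s within T)"
      by (rule bapp_vd_const[OF bapp_vd_const[OF 2]])
    have c: "((\<lambda>s. app2 (A1 (p s)) e es) has_vector_derivative app3 (A2 (p s)) e e es) (at s within T)"
      unfolding app2_def app3_def by (rule bapp_vd_const[OF bapp_vd_const[OF 3]])
    show ?thesis unfolding g1_def g2_def
      using has_vector_derivative_diff[OF has_vector_derivative_diff[OF a bapp_vd[OF b qd]]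
          has_vector_derivative_mult_right[OF c, of 2]]
      by (simp add: app2_def app3_def algebra_simps)
  qed
  have Hd: "(H has_vector_derivative g2 s * (s * (s - 1))) (at s within T)" for s T
  proof -
    have rf: "(f has_real_derivative g s) (at s within T)"
      using fd by (simp add: has_real_derivative_iff_has_vector_derivative)
    have rg: "(g has_real_derivative g1 s) (at s within T)"
      using gd by (simp add: has_real_derivative_iff_has_vector_derivative)
    have rg1: "(g1 has_real_derivative g2 s) (at s within T)"
      using g1d by (simp add: has_real_derivative_iff_has_vector_derivative)
    have "(H has_real_derivative g2 s * (s * (s - 1))) (at s within T)"
      unfolding H_def
      by (rule derivative_eq_intros rf rg rg1 refl | simp add: algebra_simps)+
    then show ?thesis by (simp add: has_real_derivative_iff_has_vector_derivative)
  qed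
  have int: "((\<lambda>s. g2 s * (s * (s - 1))) has_integral (H 1 - H 0)) {0..1}"
    by (rule fundamental_theorem_of_calculus) (auto intro: Hd)
  have R3h: "R3 J3 A2 A3 ut zt (uh - ut) (zh - zt) = 1/2 * (H 1 - H 0)"
    unfolding R3_def using integral_unique[OF int]
    by (simp add: g2_def p_def q_def e_def es_def)
  have eU: "e \<in> Uh" unfolding e_def using Uh_sub uh_in ut_in by (simp add: subspace_diff)
  have eV: "es \<in> Vh" unfolding es_def using Vh_sub zh_in zt_in by (simp add: subspace_diff)
  have p1: "p 1 = uh" "p 0 = ut" unfolding p_def e_def by auto
  have q1: "q 1 = zh" "q 0 = zt" unfolding q_def es_def by auto
  have g1z: "g 1 = 0" unfolding g_def p1 q1
    using adjoint_h[OF eU] primal_h[OF eV] by simp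
  have f1: "f 1 = J uh" unfolding f_def p1 q1 using primal_h[OF zh_in] by simp
  define \<eta> where "\<eta> = 1/2 * (- blinfun_apply (A ut) (zh - zt))
             + 1/2 * (blinfun_apply (J1 ut) (uh - ut) - app2 (A1 ut) (uh - ut) zt)"
  have g0: "g 0 = 2 * \<eta>" unfolding g_def p1 q1 \<eta>_def e_def es_def by simp
  have f0: "f 0 = J ut - blinfun_apply (A ut) zt" unfolding f_def p1 q1 by simp
  have Hs: "H 1 = - g 1 + 2 * f 1" "H 0 = g 0 + 2 * f 0" unfolding H_def by simp_all
  have R3h': "R3 J3 A2 A3 ut zt (uh - ut) (zh - zt) = J uh - J ut + blinfun_apply (A ut) zt - \<eta>"
    unfolding R3h Hs g1z f1 g0 f0 by simp
  define E where "E = J u - J ut"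
  define R where "R = R3 J3 A2 A3 ut zt (u - ut) (z - zt)"
  define Rh where "Rh = R3 J3 A2 A3 ut zt (uh - ut) (zh - zt)"
  have D: "E - \<eta> = (J u - J uh) + Rh - blinfun_apply (A ut) zt"
    unfolding E_def Rh_def R3h' by simp
  have Rh_le: "\<bar>Rh\<bar> \<le> \<bar>R - Rh\<bar> + \<bar>R\<bar>" by linarith
  have sat: "\<bar>J u - J uh\<bar> + \<bar>R - Rh\<bar> + \<bar>- blinfun_apply (A ut) zt\<bar> + \<bar>R\<bar> < bh * \<bar>E\<bar>"
    using saturation unfolding R_def Rh_def E_def .
  have Dle: "\<bar>E - \<eta>\<bar> < bh * \<bar>E\<bar>" unfolding D using sat Rh_le by linarith
  have "0 < bh * \<bar>E\<bar>" using Dle by linarith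
  then have bhpos: "0 < bh" and Epos: "0 < \<bar>E\<bar>"
    by (simp_all add: zero_less_mult_iff)
  have bh1: "bh < 1" using bh b0 by linarith
  have up: "\<bar>\<eta>\<bar> \<le> (1 + bh) * \<bar>E\<bar>" using Dle by (simp add: algebra_simps; linarith)
  have lo: "(1 - bh) * \<bar>E\<bar> \<le> \<bar>\<eta>\<bar>" using Dle by (simp add: algebra_simps; linarith)
  have up0: "\<bar>\<eta>\<bar> \<le> (1 + b0) * \<bar>E\<bar>"
    using up mult_right_mono[of bh b0 "\<bar>E\<bar>"] bh by (simp add: algebra_simps)
  have lo0: "(1 - b0) * \<bar>E\<bar> \<le> \<bar>\<eta>\<bar>"
    using lo mult_right_mono[of bh b0 "\<bar>E\<bar>"] bh by (simp add: algebra_simps)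
  have c1: "1 / (1 + bh) * \<bar>\<eta>\<bar> \<le> \<bar>E\<bar>" using up bhpos by (simp add: field_simps)
  have c2: "\<bar>E\<bar> \<le> 1 / (1 - bh) * \<bar>\<eta>\<bar>" using lo bh1 by (simp add: field_simps)
  have c3: "1 / (1 + b0) * \<bar>\<eta>\<bar> \<le> \<bar>E\<bar>" using up0 b0 by (simp add: field_simps)
  have c4: "\<bar>E\<bar> \<le> 1 / (1 - b0) * \<bar>\<eta>\<bar>" using lo0 b0 by (simp add: field_simps)
  show ?thesis unfolding Let_def \<eta>_def[symmetric] E_def[symmetric] using c1 c2 c3 c4 by blast
qed

end
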